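(* Let $q$ be a self-join-free Boolean conjunctive query such that $q$ is saturated and the attack graph of $q$ contains no strong cycle. Let $\mathcal{S}$ be an initial strong component in the attack graph of $q$ with $|\mathcal{S}|\ge 2$. Then for every atom $F\in\mathcal{S}$ there exists an atom $H\in\mathcal{S}$ such that $F\to H$ is an edge of the M-graph of $q$.
   Context: Every relation name has a signature $[n,k]$ ($1\le k\le n$; primary-key positions $1,\dots,k$) and a mode in $\{\mathsf{c},\mathsf{i}\}$. For an atom $F$, $\mathrm{key}(F)$ = variables at primary-key positions, $\mathrm{vars}(F)$ = all its variables. A self-join-free Boolean conjunctive query is a finite set of atoms with distinct relation names. $\mathcal{K}(p)=\{\mathrm{key}(F)\to\mathrm{vars}(F)\mid F\in p\}$; $q^{\mathsf{c}}$ = atoms of mode $\mathsf{c}$; $F^{+,q}$ = variables $x$ with $\mathcal{K}(q\setminus\{F\})\cup\mathcal{K}(q^{\mathsf{c}})\models\mathrm{key}(F)\to x$. Attack graph: vertices atoms of $q$, edge $F\to G$ ($F\ne G$) iff there are atoms $F_0=F,\dots,F_\ell=G$ of $q$ and variables $x_i\in(\mathrm{vars}(F_{i-1})\cap\mathrm{vars}(F_i))\setminus F^{+,q}$. Attack weak if $\mathcal{K}(q)\models\mathrm{key}(F)\to\mathrm{key}(G)$, else strong; a cycle is strong if it contains a strong attack. A strong component is initial if no edge enters it from another strong component. $F$ attacks a variable $x$ if $F$ attacks $N(x)$ in $q\cup\{N(x)\}$ ($N$ fresh, signature $[1,1]$). A sequential proof for $\mathcal{K}(q)\models Z\to w$: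 atoms $F_1,\dots,F_\ell$ of $q$ with $\mathrm{key}(F_i)\subseteq Z\cup\bigcup_{j<i}\mathrm{vars}(F_j)$ and $w\in\mathrm{vars}(F_k)$ for some $k$. $Z\to w$ is internal to $q$ if some such proof has no atom attacking a variable of $Z\cup\{w\}$ and $Z\subseteq\mathrm{vars}(F)$ for some $F\in q$. $q$ is saturated if $\mathcal{K}(q^{\mathsf{c}})\models\sigma$ for every $\sigma$ internal to $q$. The M-graph of $q$: vertices atoms of $q$, edge $F\to G$ ($F\ne G$) iff $\mathcal{K}(q^{\mathsf{c}})\models\mathrm{vars}(F)\to\mathrm{key}(G)$. *)

theory Defs
  imports Main
begin

datatype mode = ModeC | ModeI

datatype ('v, 'c) trm = Var 'v | Cst 'c

text \<open>An atom: relation name, argument list (length n), number k of primary-key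
  positions (positions 1..k), and the mode of its relation name.\<close>
datatype ('r, 'v, 'c) atom = Atom (rel: 'r) (args: "('v, 'c) trm list") (kl: nat) (md: mode)

definition vars :: "('r, 'v, 'c) atom \<Rightarrow> 'v set" where
  "vars F = {x. Var x \<in> set (args F)}"

definition key :: "('r, 'v, 'c) atom \<Rightarrow> 'v set" where
  "key F = {x. Var x \<in> set (take (kl F) (args F))}"

definition wf_atom :: "('r, 'v, 'c) atom \<Rightarrow> bool" where
  "wf_atom F \<longleftrightarrow> 1 \<le> kl F \<and> kl F \<le> length (args F)"

definition sjf_query :: "('r, 'v, 'c) atom set \<Rightarrow> bool" where
  "sjf_query q \<longleftrightarrow> finite q \<and> inj_on rel q \<and> (\<forall>F\<in>q. wf_atom F)"

definition cpart :: "('r, 'v, 'c) atom set \<Rightarrow> ('r, 'v, 'c) atom set" where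
  "cpart q = {F \<in> q. md F = ModeC}"

definition Kfd :: "('r, 'v, 'c) atom set \<Rightarrow> ('v set \<times> 'v set) set" where
  "Kfd p = {(key F, vars F) | F. F \<in> p}"

inductive_set fd_closure :: "('v set \<times> 'v set) set \<Rightarrow> 'v set \<Rightarrow> 'v set"
  for \<Sigma> :: "('v set \<times> 'v set) set" and Z :: "'v set" where
  base: "x \<in> Z \<Longrightarrow> x \<in> fd_closure \<Sigma> Z"
| step: "(X, Y) \<in> \<Sigma> \<Longrightarrow> (\<And>x. x \<in> X \<Longrightarrow> x \<in> fd_closure \<Sigma> Z) \<Longrightarrow> y \<in> Y \<Longrightarrow> y \<in> fd_closure \<Sigma> Z"

definition fd_implies :: "('v set \<times> 'v set) set \<Rightarrow> 'v set \<Rightarrow> 'v set \<Rightarrow> bool" where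
  "fd_implies \<Sigma> Z W \<longleftrightarrow> W \<subseteq> fd_closure \<Sigma> Z"

definition Fplus :: "('r, 'v, 'c) atom set \<Rightarrow> ('r, 'v, 'c) atom \<Rightarrow> 'v set" where
  "Fplus q F = fd_closure (Kfd (q - {F}) \<union> Kfd (cpart q)) (key F)"

definition attacks :: "('r, 'v, 'c) atom set \<Rightarrow> ('r, 'v, 'c) atom \<Rightarrow> ('r, 'v, 'c) atom \<Rightarrow> bool" where
  "attacks q F G \<longleftrightarrow> F \<in> q \<and> G \<in> q \<and> F \<noteq> G \<and>
     (\<exists>p. length p \<ge> 2 \<and> hd p = F \<and> last p = G \<and> set p \<subseteq> q \<and>
        (\<forall>i. Suc i < length p \<longrightarrow> (vars (p ! i) \<inter> vars (p ! Suc i)) - Fplus q F \<noteq> {}))"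

definition attack_rel :: "('r, 'v, 'c) atom set \<Rightarrow> (('r, 'v, 'c) atom \<times> ('r, 'v, 'c) atom) set" where
  "attack_rel q = {(F, G). attacks q F G}"

definition weak_attack :: "('r, 'v, 'c) atom set \<Rightarrow> ('r, 'v, 'c) atom \<Rightarrow> ('r, 'v, 'c) atom \<Rightarrow> bool" where
  "weak_attack q F G \<longleftrightarrow> attacks q F G \<and> fd_implies (Kfd q) (key F) (key G)"

definition strong_attack :: "('r, 'v, 'c) atom set \<Rightarrow> ('r, 'v, 'c) atom \<Rightarrow> ('r, 'v, 'c) atom \<Rightarrow> bool" where
  "strong_attack q F G \<longleftrightarrow> attacks q F G \<and> \<not> fd_implies (Kfd q) (key F) (key G)"

definition has_strong_cycle :: "('r, 'v, 'c) atom set \<Rightarrow> bool" where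
  "has_strong_cycle q \<longleftrightarrow> (\<exists>F G. strong_attack q F G \<and> (G, F) \<in> (attack_rel q)\<^sup>*)"

definition strong_component :: "('r, 'v, 'c) atom set \<Rightarrow> ('r, 'v, 'c) atom set \<Rightarrow> bool" where
  "strong_component q S \<longleftrightarrow> (\<exists>F\<in>q. S = {G \<in> q. (F, G) \<in> (attack_rel q)\<^sup>* \<and> (G, F) \<in> (attack_rel q)\<^sup>*})"

definition initial_strong_component :: "('r, 'v, 'c) atom set \<Rightarrow> ('r, 'v, 'c) atom set \<Rightarrow> bool" where
  "initial_strong_component q S \<longleftrightarrow> strong_component q S \<and>
     \<not> (\<exists>G H. G \<notin> S \<and> H \<in> S \<and> attacks q G H)"

text \<open>Attacks on a variable x: F attacks N(x) in q \<union> {N(x)}, with N a fresh relation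
  name of signature [1,1]. Freshness is realised by lifting relation names to 'r option,
  with N named None. (The mode of N is irrelevant; we take it to be i.)\<close>
definition lift_atom :: "('r, 'v, 'c) atom \<Rightarrow> ('r option, 'v, 'c) atom" where
  "lift_atom = map_atom Some id id"

definition N_atom :: "'v \<Rightarrow> ('r option, 'v, 'c) atom" where
  "N_atom x = Atom None [Var x] 1 ModeI"

definition attacks_var :: "('r, 'v, 'c) atom set \<Rightarrow> ('r, 'v, 'c) atom \<Rightarrow> 'v \<Rightarrow> bool" where
  "attacks_var q F x \<longleftrightarrow> attacks (lift_atom ` q \<union> {N_atom x}) (lift_atom F) (N_atom x)"

definition seq_proof :: "('r, 'v, 'c) atom set \<Rightarrow> 'v set \<Rightarrow> 'v \<Rightarrow> ('r, 'v, 'c) atom list \<Rightarrow> bool" where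
  "seq_proof q Z w ps \<longleftrightarrow> set ps \<subseteq> q \<and>
     (\<forall>i < length ps. key (ps ! i) \<subseteq> Z \<union> (\<Union>j<i. vars (ps ! j))) \<and>
     (\<exists>k < length ps. w \<in> vars (ps ! k))"

definition internal :: "('r, 'v, 'c) atom set \<Rightarrow> 'v set \<Rightarrow> 'v \<Rightarrow> bool" where
  "internal q Z w \<longleftrightarrow>
     (\<exists>ps. seq_proof q Z w ps \<and> (\<forall>G\<in>set ps. \<forall>x \<in> Z \<union> {w}. \<not> attacks_var q G x)) \<and>
     (\<exists>F\<in>q. Z \<subseteq> vars F)"

definition saturated :: "('r, 'v, 'c) atom set \<Rightarrow> bool" where
  "saturated q \<longleftrightarrow> (\<forall>Z w. internal q Z w \<longrightarrow> fd_implies (Kfd (cpart q)) Z {w})"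

definition M_edge :: "('r, 'v, 'c) atom set \<Rightarrow> ('r, 'v, 'c) atom \<Rightarrow> ('r, 'v, 'c) atom \<Rightarrow> bool" where
  "M_edge q F G \<longleftrightarrow> F \<in> q \<and> G \<in> q \<and> F \<noteq> G \<and> fd_implies (Kfd (cpart q)) (vars F) (key G)"

end

theory Submission imports Defs begin

definition unlift :: "('r option, 'v, 'c) atom \<Rightarrow> ('r, 'v, 'c) atom" where
  "unlift = map_atom the id id"

lemma args_map_atom[simp]: "args (map_atom f id id A) = args A"
  by (cases A) (simp add: trm.map_id0)
lemma kl_map_atom[simp]: "kl (map_atom f id id A) = kl A"
  by (cases A) simp
lemma md_map_atom[simp]: "md (map_atom f id id A) = md A"
  by (cases A) simp
lemma unlift_lift[simp]: "unlift (lift_atom A) = A"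
  unfolding unlift_def lift_atom_def by (cases A) (simp add: trm.map_id0)
lemma vars_map[simp]: "vars (map_atom f id id A) = vars A" by (simp add: vars_def)
lemma key_map[simp]: "key (map_atom f id id A) = key A" by (simp add: key_def)
lemma lift_inj: "lift_atom A = lift_atom B \<Longrightarrow> A = B"
  by (metis unlift_lift)
lemma lift_ne_N: "lift_atom A \<noteq> N_atom x"
  unfolding lift_atom_def N_atom_def by (cases A) simp
lemma vars_N[simp]: "vars (N_atom x) = {x}"
  unfolding N_atom_def vars_def by simp

lemma closure_mono: "x \<in> fd_closure \<Sigma> Z \<Longrightarrow> \<Sigma> \<subseteq> \<Sigma>' \<Longrightarrow> x \<in> fd_closure \<Sigma>' Z"
  by (induction rule: fd_closure.induct) (auto intro: fd_closure.intros)

lemma Fplus_sub: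
  assumes "P \<in> q"
  shows "Fplus q P \<subseteq> Fplus (lift_atom ` q \<union> {N_atom x}) (lift_atom P)"
proof -
  have "Kfd (q - {P}) \<union> Kfd (cpart q) \<subseteq> Kfd ((lift_atom ` q \<union> {N_atom x}) - {lift_atom P}) \<union> Kfd (cpart (lift_atom ` q \<union> {N_atom x}))"
  proof
    fix s assume "s \<in> Kfd (q - {P}) \<union> Kfd (cpart q)"
    then obtain A where A: "s = (key A, vars A)" "A \<in> q" "A \<noteq> P \<or> md A = ModeC"
      unfolding Kfd_def cpart_def by auto
    have s: "s = (key (lift_atom A), vars (lift_atom A))" using A(1) by (simp add: lift_atom_def)
    have "lift_atom A \<in> (lift_atom ` q \<union> {N_atom x}) - {lift_atom P} \<or> lift_atom A \<in> cpart (lift_atom ` q \<union> {N_atom x})"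
      using A(2,3) lift_inj unfolding cpart_def by (auto simp: lift_atom_def)
    then show "s \<in> Kfd ((lift_atom ` q \<union> {N_atom x}) - {lift_atom P}) \<union> Kfd (cpart (lift_atom ` q \<union> {N_atom x}))"
      using s unfolding Kfd_def by blast
  qed
  then show ?thesis unfolding Fplus_def by (auto simp: lift_atom_def intro: closure_mono)
qed

lemma attacks_var_attacks:
  assumes av: "attacks_var q P x" and xH: "x \<in> vars H" and Hq: "H \<in> q" and PH: "P \<noteq> H" and Pq: "P \<in> q"
  shows "attacks q P H"
proof -
  let ?q' = "lift_atom ` q \<union> {N_atom x}"
  let ?N = "N_atom x"
  from av obtain p where p: "length p \<ge> 2" "hd p = lift_atom P" "last p = ?N" "set p \<subseteq> ?q'"
    "\<And>i. Suc i < length p \<Longrightarrow> (vars (p ! i) \<inter> vars (p ! Suc i)) - Fplus ?q' (lift_atom P) \<noteq> {}"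
    unfolding attacks_var_def attacks_def by blast
  have FP: "Fplus q P \<subseteq> Fplus ?q' (lift_atom P)" using Fplus_sub[OF Pq] .
  define i where "i = (LEAST i. i < length p \<and> p ! i = ?N)"
  have ex: "length p - 1 < length p \<and> p ! (length p - 1) = ?N"
    using p(1,3) by (metis One_nat_def diff_less last_conv_nth le_zero_eq list.size(3) not_numeral_le_zero zero_less_one length_greater_0_conv)
  have i: "i < length p" "p ! i = ?N" using LeastI[of "\<lambda>i. i < length p \<and> p ! i = ?N", OF ex] i_def by auto
  have bef: "j < i \<Longrightarrow> p ! j \<in> lift_atom ` q" for j
  proof -
    assume "j < i"
    then have "\<not> (j < length p \<and> p ! j = ?N)" using not_less_Least i_def by blast
    moreover have "p ! j \<in> set p" using \<open>j < i\<close> i(1) by simp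
    ultimately show ?thesis using p(4) \<open>j < i\<close> i(1) by (metis (no_types, lifting) UnE less_trans singletonD subsetD)
  qed
  have p0: "p ! 0 = lift_atom P" using p(1,2) by (metis hd_conv_nth list.size(3) not_numeral_le_zero)
  have i0: "i \<noteq> 0" using i(2) p0 lift_ne_N by metis
  define p' where "p' = map unlift (take i p) @ [H]"
  have lp': "length p' = Suc i" using i(1) by (simp add: p'_def)
  have nth1: "j < i \<Longrightarrow> p' ! j = unlift (p ! j)" for j
    using i(1) by (simp add: p'_def nth_append)
  have nth2: "p' ! i = H" using i(1) by (simp add: p'_def nth_append)
  have vu: "j < i \<Longrightarrow> vars (p' ! j) = vars (p ! j)" for j
    using nth1 by (simp add: unlift_def)
  show ?thesis unfolding attacks_def
  proof (intro conjI exI[of _ p'])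
    show "P \<in> q" "H \<in> q" "P \<noteq> H" by fact+
    show "2 \<le> length p'" using lp' i0 by simp
    show "hd p' = P" using i0 nth1[of 0] lp' p0 by (metis hd_conv_nth list.size(3) nat.distinct(1) neq0_conv unlift_lift)
    show "last p' = H" by (simp add: p'_def)
    show "set p' \<subseteq> q"
    proof
      fix A assume "A \<in> set p'"
      then obtain j where "j < Suc i" "A = p' ! j" using lp' by (metis in_set_conv_nth)
      then show "A \<in> q" using nth1 nth2 bef Hq
        by (metis imageE less_antisym unlift_lift)
    qed
    show "\<forall>j. Suc j < length p' \<longrightarrow> vars (p' ! j) \<inter> vars (p' ! Suc j) - Fplus q P \<noteq> {}"
    proof (intro allI impI)
      fix j assume "Suc j < length p'"
      then have ji: "j < i" using lp' by simp
      have hj: "vars (p ! j) \<inter> vars (p ! Suc j) - Fplus ?q' (lift_atom P) \<noteq> {}"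
        using p(5)[of j] ji i(1) by simp
      show "vars (p' ! j) \<inter> vars (p' ! Suc j) - Fplus q P \<noteq> {}"
      proof (cases "Suc j = i")
        case True
        then have "x \<in> vars (p ! j)" "x \<notin> Fplus ?q' (lift_atom P)" using hj i(2) by auto
        then show ?thesis using True nth2 vu[OF ji] xH FP by auto
      next
        case False
        then have "Suc j < i" using ji by simp
        then show ?thesis using hj vu[OF ji] vu[of "Suc j"] FP by auto
      qed
    qed
  qed
qed


definition valid :: "('r, 'v, 'c) atom set \<Rightarrow> 'v set \<Rightarrow> ('r, 'v, 'c) atom list \<Rightarrow> bool" where
  "valid R Z ps \<longleftrightarrow> set ps \<subseteq> R \<and> (\<forall>i < length ps. key (ps ! i) \<subseteq> Z \<union> \<Union> (vars ` set (take i ps)))"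

lemma valid_append:
  assumes "valid R Z ps" "valid R Z qs" shows "valid R Z (ps @ qs)"
  unfolding valid_def
proof (intro conjI allI impI)
  show "set (ps @ qs) \<subseteq> R" using assms unfolding valid_def by auto
  fix i assume i: "i < length (ps @ qs)"
  show "key ((ps @ qs) ! i) \<subseteq> Z \<union> \<Union> (vars ` set (take i (ps @ qs)))"
  proof (cases "i < length ps")
    case True
    then show ?thesis using assms(1) unfolding valid_def by (auto simp: nth_append)
  next
    case False
    then have "i - length ps < length qs" using i by simp
    then have "key (qs ! (i - length ps)) \<subseteq> Z \<union> \<Union> (vars ` set (take (i - length ps) qs))"
      using assms(2) unfolding valid_def by blast
    then show ?thesis using False by (auto simp: nth_append)
  qed
qed

lemma valid_snoc:
  assumes "valid R Z ps" "A \<in> R" "key A \<subseteq> Z \<union> \<Union> (vars ` set ps)" shows "valid R Z (ps @ [A])"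
  using assms unfolding valid_def by (auto simp: nth_append)

lemma finite_key: "finite (key A)"
proof -
  have "key A = Var -` set (take (kl A) (args A))" unfolding key_def by auto
  then show ?thesis by (metis finite_set finite_vimageI inj_def trm.inject(1))
qed

lemma valid_many:
  assumes "finite X" "\<forall>x\<in>X. \<exists>ps. valid R Z ps \<and> x \<in> Z \<union> \<Union> (vars ` set ps)"
  shows "\<exists>ps. valid R Z ps \<and> X \<subseteq> Z \<union> \<Union> (vars ` set ps)"
  using assms
proof (induction X rule: finite_induct)
  case empty
  show ?case by (intro exI[of _ "[]"]) (simp add: valid_def)
next
  case (insert x F)
  then obtain ps where ps: "valid R Z ps" "F \<subseteq> Z \<union> \<Union> (vars ` set ps)" by auto
  from insert obtain qs where qs: "valid R Z qs" "x \<in> Z \<union> \<Union> (vars ` set qs)" by auto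
  show ?case using valid_append[OF ps(1) qs(1)] ps(2) qs(2)
    by (intro exI[of _ "ps @ qs"]) auto
qed

lemma closure_seq:
  assumes "x \<in> fd_closure (Kfd R) Z"
  shows "\<exists>ps. valid R Z ps \<and> x \<in> Z \<union> \<Union> (vars ` set ps)"
  using assms
proof (induction rule: fd_closure.induct)
  case (base x)
  then show ?case by (intro exI[of _ "[]"]) (simp add: valid_def)
next
  case (step X Y y)
  then obtain A where A: "X = key A" "Y = vars A" "A \<in> R" unfolding Kfd_def by auto
  have "\<forall>x\<in>key A. \<exists>ps. valid R Z ps \<and> x \<in> Z \<union> \<Union> (vars ` set ps)"
    using step A(1) by blast
  then obtain ps where ps: "valid R Z ps" "key A \<subseteq> Z \<union> \<Union> (vars ` set ps)"
    using valid_many[OF finite_key, of A R Z] by blast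
  have "y \<in> vars A" using step A(2) by blast
  then show ?case using valid_snoc[OF ps(1) A(3) ps(2)]
    by (intro exI[of _ "ps @ [A]"]) auto
qed

lemma valid_seq_proof:
  assumes "valid R Z ps" "R \<subseteq> q" "x \<in> \<Union> (vars ` set ps)"
  shows "seq_proof q Z x ps"
  unfolding seq_proof_def
proof (intro conjI allI impI)
  show "set ps \<subseteq> q" using assms unfolding valid_def by auto
  fix i assume i: "i < length ps"
  have "\<Union> (vars ` set (take i ps)) = (\<Union>j<i. vars (ps ! j))"
  proof -
    have "set (take i ps) = (\<lambda>j. ps ! j) ` {..<i}" using i
      by (auto simp: set_conv_nth nth_take) (metis lessThan_iff nth_take order.strict_trans imageI)
    then show ?thesis by auto
  qed
  moreover have "key (ps ! i) \<subseteq> Z \<union> \<Union> (vars ` set (take i ps))" using assms(1) i unfolding valid_def by blast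
  ultimately show "key (ps ! i) \<subseteq> Z \<union> (\<Union>j<i. vars (ps ! j))" by simp
next
  show "\<exists>k<length ps. x \<in> vars (ps ! k)" using assms(3) by (auto simp: in_set_conv_nth)
qed


theorem lemma29:
  fixes q :: "('r, 'v, 'c) atom set" and S :: "('r, 'v, 'c) atom set"
  assumes "sjf_query q"
    and "saturated q"
    and "\<not> has_strong_cycle q"
    and "initial_strong_component q S"
    and "card S \<ge> 2"
  shows "\<forall>F\<in>S. \<exists>H\<in>S. M_edge q F H"
proof
  let ?R = "attack_rel q"
  obtain F0 where F0: "F0 \<in> q" and Sdef: "S = {G \<in> q. (F0, G) \<in> ?R\<^sup>* \<and> (G, F0) \<in> ?R\<^sup>*}"
    using assms(4) unfolding initial_strong_component_def strong_component_def by blast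
  have init: "\<And>G H. H \<in> S \<Longrightarrow> attacks q G H \<Longrightarrow> G \<in> S"
    using assms(4) unfolding initial_strong_component_def by blast
  have Sq: "S \<subseteq> q" using Sdef by auto
  fix F assume FS: "F \<in> S"
  have finS: "finite S" using assms(5) card.infinite by fastforce
  have "card (S - {F}) \<ge> 1" using assms(5) FS finS by (simp add: card_Diff_singleton)
  then obtain F' where F': "F' \<in> S" "F' \<noteq> F"
    by (metis Diff_iff card.empty ex_in_conv insertI1 not_one_le_zero)
  have "(F, F') \<in> ?R\<^sup>*" using FS F' Sdef by (blast intro: rtrancl_trans)
  then have "(F, F') \<in> ?R\<^sup>+" using F'(2) by (metis rtranclD)
  then obtain G1 where G1: "(F, G1) \<in> ?R" "(G1, F') \<in> ?R\<^sup>*" by (meson tranclD)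
  have att: "attacks q F G1" using G1(1) unfolding attack_rel_def by simp
  have G1S: "G1 \<in> S"
  proof -
    have "G1 \<in> q" using att unfolding attacks_def by simp
    moreover have "(F0, G1) \<in> ?R\<^sup>*" using FS Sdef G1(1) by (blast intro: rtrancl_into_rtrancl)
    moreover have "(G1, F0) \<in> ?R\<^sup>*" using F' Sdef G1(2) by (blast intro: rtrancl_trans)
    ultimately show ?thesis using Sdef by blast
  qed
  have "(G1, F) \<in> ?R\<^sup>*" using G1S FS Sdef by (blast intro: rtrancl_trans)
  then have weak: "fd_implies (Kfd q) (key F) (key G1)"
    using assms(3) att unfolding has_strong_cycle_def strong_attack_def by blast
  have FG1: "F \<noteq> G1" using att unfolding attacks_def by simp
  define D where "D = fd_closure (Kfd (q - S)) (vars F)"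
  have keyvars: "key A \<subseteq> vars A" for A :: "('r, 'v, 'c) atom"
    unfolding key_def vars_def by (auto dest: in_set_takeD)
  have "\<exists>H\<in>S - {F}. key H \<subseteq> D"
  proof (rule ccontr)
    assume nH: "\<not> ?thesis"
    have "x \<in> D" if "x \<in> fd_closure (Kfd q) (key F)" for x
      using that
    proof (induction rule: fd_closure.induct)
      case (base x)
      then show ?case using keyvars unfolding D_def by (blast intro: fd_closure.base)
    next
      case (step X Y y)
      then obtain A where A: "X = key A" "Y = vars A" "A \<in> q" unfolding Kfd_def by auto
      show ?case
      proof (cases "A \<in> S")
        case True
        then have "A = F" using nH step A by blast
        then show ?thesis using step A unfolding D_def by (blast intro: fd_closure.base)
      next
        case False
        then have "(X, Y) \<in> Kfd (q - S)" using A unfolding Kfd_def by blast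
        then show ?thesis using step unfolding D_def by (blast intro: fd_closure.step)
      qed
    qed
    then have "key G1 \<subseteq> D" using weak unfolding fd_implies_def by blast
    then show False using nH G1S FG1 by blast
  qed
  then obtain H where H: "H \<in> S" "H \<noteq> F" "key H \<subseteq> D" by blast
  have "key H \<subseteq> fd_closure (Kfd (cpart q)) (vars F)"
  proof
    fix x assume xH: "x \<in> key H"
    then have "x \<in> D" using H by blast
    then obtain ps where ps: "valid (q - S) (vars F) ps" "x \<in> vars F \<union> \<Union> (vars ` set ps)"
      using closure_seq[of x "q - S" "vars F"] unfolding D_def by blast
    show "x \<in> fd_closure (Kfd (cpart q)) (vars F)"
    proof (cases "x \<in> vars F")
      case True
      then show ?thesis by (rule fd_closure.base)
    next
      case False
      then have "x \<in> \<Union> (vars ` set ps)" using ps by blast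
      then have sp: "seq_proof q (vars F) x ps" using valid_seq_proof[OF ps(1), of q x] by blast
      have na: "\<forall>G\<in>set ps. \<forall>y \<in> vars F \<union> {x}. \<not> attacks_var q G y"
      proof (intro ballI notI)
        fix G y assume G: "G \<in> set ps" and y: "y \<in> vars F \<union> {x}" and av: "attacks_var q G y"
        have GqS: "G \<in> q" "G \<notin> S" using G ps(1) unfolding valid_def by auto
        show False
        proof (cases "y \<in> vars F")
          case True
          have "attacks q G F" using attacks_var_attacks[OF av True] Sq FS GqS by blast
          then show False using init FS GqS by blast
        next
          case False
          then have "y \<in> vars H" using y xH keyvars by blast
          then have "attacks q G H" using attacks_var_attacks[OF av] Sq H GqS by blast
          then show False using init H GqS by blast
        qed
      qed
      have "internal q (vars F) x" unfolding internal_def using sp na FS Sq by blast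
      then show ?thesis using assms(2) unfolding saturated_def fd_implies_def by blast
    qed
  qed
  then have "M_edge q F H" unfolding M_edge_def fd_implies_def using FS H Sq by blast
  then show "\<exists>H\<in>S. M_edge q F H" using H by blast
qed

end
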